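(* For every integer $s\ge5$, $F_{s,6}(x)=\frac{1}{(s-1)!}\,g_{s,6}(x)\prod_{p=6}^{s}(x-p)$ (an empty product equals $1$), where $g_{s,6}(x)=x^4-(30s-16)x^3+(150s^2-90s+11)x^2-(240s^3-90s^2+4)x+120s^4$.
   Context: For an integer $j\ge0$, $\binom{x}{j}=x(x-1)\cdots(x-j+1)/j!$ as a polynomial in $x$, and $\binom{x}{j}=0$ for $j<0$. For integers $s\ge1$, $k\ge1$, the Moser polynomial is $F_{s,k}(x)=\sum_{p=1}^{s}(-1)^{p-1}p^{k-1}\binom{x}{s-p}$. *)

theory Defs
  imports "HOL-Computational_Algebra.Polynomial"
begin

definition binom_poly :: "int \<Rightarrow> real poly" where
  "binom_poly j = (if j < 0 then 0
     else smult (1 / fact (nat j)) (\<Prod>i<nat j. [:- of_nat i, 1:]))"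

definition moser_poly :: "nat \<Rightarrow> nat \<Rightarrow> real poly" where
  "moser_poly s k = (\<Sum>p=1..s. smult ((-1) ^ (p - 1) * (of_nat p) ^ (k - 1))
                                     (binom_poly (int s - int p)))"

end

theory Submission
  imports Defs
begin

lemma pb: "poly (binom_poly (int k)) x = x gchoose k"
  by (simp add: binom_poly_def poly_prod gbinomial_prod_rev atLeast0LessThan field_simps)

lemma pbneg: "j < 0 \<Longrightarrow> poly (binom_poly j) x = 0"
  by (simp add: binom_poly_def)

lemma pshift: "poly (binom_poly j) (x+1) = poly (binom_poly j) x + poly (binom_poly (j-1)) x"
proof (cases "j < 0")
  case True thus ?thesis by (simp add: pbneg)
next
  case False
  then obtain k where k: "j = int k" by (metis nonneg_int_cases not_less)
  show ?thesis
  proof (cases k)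
    case 0 thus ?thesis using k by (simp add: binom_poly_def)
  next
    case (Suc m)
    hence "j - 1 = int m" using k by simp
    have "j = int (Suc m)" using k Suc by simp
    thus ?thesis using \<open>j - 1 = int m\<close> by (simp only: pb gbinomial_Suc_Suc)
  qed
qed

definition G :: "nat \<Rightarrow> real \<Rightarrow> real" where
  "G s x = (1 / fact (s - 1)) * ((x^4 - (30 * real s - 16) * x^3 + (150 * (real s)^2 - 90 * real s + 11) * x^2
      - (240 * (real s)^3 - 90 * (real s)^2 + 4) * x + 120 * (real s)^4) * (\<Prod>p\<in>{6..s}. x - real p))"

lemma moser_eval: "poly (moser_poly s 6) x = (\<Sum>p=1..s. (-1) ^ (p - 1) * (real p) ^ 5 * poly (binom_poly (int s - int p)) x)"
  by (simp add: moser_poly_def poly_sum)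

lemma rhs_eval: "poly (smult (1 / fact (s - 1))
      ([: 120 * (of_nat s) ^ 4,
          - (240 * (of_nat s) ^ 3 - 90 * (of_nat s) ^ 2 + 4),
          150 * (of_nat s) ^ 2 - 90 * of_nat s + 11,
          - (30 * of_nat s - 16),
          1 :]
       * (\<Prod>p\<in>{6..s}. [:- of_nat p, 1:]))) x = G s x"
  by (simp add: G_def poly_prod algebra_simps power2_eq_square power3_eq_cube power4_eq_xxxx)

lemma F_shift: "poly (moser_poly (Suc s) 6) (x+1) = poly (moser_poly (Suc s) 6) x + poly (moser_poly s 6) x"
proof -
  have "poly (moser_poly (Suc s) 6) (x+1) =
     (\<Sum>p=1..Suc s. (-1) ^ (p - 1) * (real p) ^ 5 * poly (binom_poly (int (Suc s) - int p)) x)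
   + (\<Sum>p=1..Suc s. (-1) ^ (p - 1) * (real p) ^ 5 * poly (binom_poly (int s - int p)) x)"
  proof -
    have "poly (moser_poly (Suc s) 6) (x+1) = (\<Sum>p=1..Suc s. (-1) ^ (p - 1) * (real p) ^ 5 * poly (binom_poly (int (Suc s) - int p)) x
       + (-1) ^ (p - 1) * (real p) ^ 5 * poly (binom_poly (int s - int p)) x)"
      unfolding moser_eval
    proof (rule sum.cong[OF refl])
      fix p
      have "int (Suc s) - int p - 1 = int s - int p" by simp
      then show "(-1) ^ (p - 1) * (real p) ^ 5 * poly (binom_poly (int (Suc s) - int p)) (x+1) =
        (-1) ^ (p - 1) * (real p) ^ 5 * poly (binom_poly (int (Suc s) - int p)) x
       + (-1) ^ (p - 1) * (real p) ^ 5 * poly (binom_poly (int s - int p)) x"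
        by (simp only: pshift distrib_left)
    qed
    thus ?thesis by (simp only: sum.distrib)
  qed
  also have "(\<Sum>p=1..Suc s. (-1) ^ (p - 1) * (real p) ^ 5 * poly (binom_poly (int s - int p)) x)
      = poly (moser_poly s 6) x"
    by (simp add: moser_eval pbneg)
  finally show ?thesis by (simp add: moser_eval)
qed

lemma F_zero: "poly (moser_poly s 6) 0 = (-1)^(s-1) * (real s)^5"
proof (cases s)
  case 0 thus ?thesis by (simp add: moser_poly_def)
next
  case (Suc m)
  have "poly (moser_poly s 6) 0 = (\<Sum>p=1..s. (if p = s then (-1)^(s-1) * (real s)^5 else 0))"
    unfolding moser_eval
  proof (rule sum.cong)
    fix p assume "p \<in> {1..s}"
    thus "(-1) ^ (p - 1) * (real p) ^ 5 * poly (binom_poly (int s - int p)) 0 =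
        (if p = s then (-1)^(s-1) * (real s)^5 else 0)"
    proof (cases "p = s")
      case True thus ?thesis by (simp add: binom_poly_def)
    next
      case False
      with \<open>p \<in> {1..s}\<close> have eq: "int s - int p = int (Suc (s - p - 1))" by auto
      have "poly (binom_poly (int s - int p)) 0 = 0" unfolding eq pb by (simp add: gbinomial_0_left)
      thus ?thesis using False by simp
    qed
  qed simp
  also have "\<dots> = (-1)^(s-1) * (real s)^5" using Suc by simp
  finally show ?thesis .
qed


lemma prod_fact: "s \<ge> 5 \<Longrightarrow> (\<Prod>p\<in>{6..s}. real p) = fact s / 120"
proof (induction s rule: dec_induct)
  case base thus ?case by (simp add: fact_numeral)
next
  case (step n)
  have "{6..Suc n} = insert (Suc n) {6..n}" using step(1) by auto
  thus ?case using step by (simp add: field_simps)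
qed

lemma prod_neg: "(\<Prod>p\<in>{6..s}. (0::real) - real p) = (-1)^card {6..s} * (\<Prod>p\<in>{6..s}. real p)"
proof -
  have "(\<Prod>p\<in>{6..s}. (0::real) - real p) = (\<Prod>p\<in>{6..s}. (-1) * real p)" by simp
  also have "\<dots> = (-1)^card {6..s} * (\<Prod>p\<in>{6..s}. real p)" by (simp only: prod.distrib prod_constant)
  finally show ?thesis .
qed

lemma G_zero: "s \<ge> 5 \<Longrightarrow> G s 0 = (-1)^(s-1) * (real s)^5"
proof -
  assume s: "s \<ge> 5"
  have c: "card {6..s} = s - 5" by simp
  have "G s 0 = 1 / fact (s - 1) * (120 * real s ^ 4 * ((-1)^(s-5) * (fact s / 120)))"
    unfolding G_def using prod_neg[of s] prod_fact[OF s] c by simp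
  also have "fact s = real s * fact (s - 1)" using s by (simp add: fact_reduce)
  also have "(-1::real)^(s-5) = (-1)^(s-1)"
  proof -
    have e: "s - 1 = (s - 5) + 4" using s by simp
    have "(-1::real)^(s-1) = (-1)^(s-5) * (-1)^4" unfolding e power_add ..
    thus ?thesis by simp
  qed
  finally have "G s 0 = 1 / fact (s - 1) * (120 * real s ^ 4 * ((-1)^(s-1) * (real s * fact (s - 1) / 120)))" .
  moreover have "(fact (s-1)::real) \<noteq> 0" by simp
  moreover have "real s ^ 5 = real s ^ 4 * real s" by (simp add: power_Suc2[symmetric])
  ultimately show ?thesis by (simp add: field_simps)
qed

definition gg :: "real \<Rightarrow> real \<Rightarrow> real" where
  "gg s x = x^4 - (30 * s - 16) * x^3 + (150 * s^2 - 90 * s + 11) * x^2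
      - (240 * s^3 - 90 * s^2 + 4) * x + 120 * s^4"

lemma gg_id: "gg (s+1) (x+1) * (x-5) = gg (s+1) x * (x - (s+1)) + s * gg s x"
  unfolding gg_def by (simp add: algebra_simps power2_eq_square power3_eq_cube power4_eq_xxxx)

lemma G_gg: "G s x = (1 / fact (s - 1)) * (gg (real s) x * (\<Prod>p\<in>{6..s}. x - real p))"
  unfolding G_def gg_def by simp

lemma G_shift: "s \<ge> 5 \<Longrightarrow> G (Suc s) (x+1) = G (Suc s) x + G s x"
proof -
  assume s: "s \<ge> 5"
  define P where "P = (\<Prod>p\<in>{6..s}. x - real p)"
  have p1: "(\<Prod>p\<in>{6..Suc s}. x + 1 - real p) = (x - 5) * P"
  proof -
    have "(\<Prod>p\<in>{6..Suc s}. x + 1 - real p) = (\<Prod>p\<in>{5..s}. x + 1 - real (Suc p))"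
      using prod.shift_bounds_cl_Suc_ivl[of "\<lambda>p. x + 1 - real p" 5 s] by (simp add: numeral_eq_Suc)
    also have "\<dots> = (\<Prod>p\<in>{5..s}. x - real p)" by simp
    also have "\<dots> = (x - 5) * P" unfolding P_def using s
      by (subst prod.atLeast_Suc_atMost) (auto simp: numeral_eq_Suc)
    finally show ?thesis .
  qed
  have p2: "(\<Prod>p\<in>{6..Suc s}. x - real p) = (x - real (Suc s)) * P"
  proof -
    have "{6..Suc s} = insert (Suc s) {6..s}" using s by auto
    thus ?thesis unfolding P_def by simp
  qed
  have f: "(fact s :: real) = real s * fact (s - 1)" using s by (simp add: fact_reduce)
  have s0: "real s \<noteq> 0" using s by simp
  have fz: "(fact (s-1) :: real) \<noteq> 0" by simp
  have e: "real (Suc s) = real s + 1" by simp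
  have "G (Suc s) (x+1) = (1 / fact s) * (gg (real s + 1) (x+1) * ((x - 5) * P))"
    by (simp only: G_gg p1 e diff_Suc_1)
  also have "\<dots> = (1 / fact s) * ((gg (real s + 1) (x+1) * (x - 5)) * P)"
    by (simp only: mult.assoc)
  also have "\<dots> = (1 / fact s) * ((gg (real s + 1) x * (x - (real s + 1)) + real s * gg (real s) x) * P)"
    by (simp only: gg_id)
  also have "\<dots> = G (Suc s) x + G s x"
    unfolding G_gg p2 P_def[symmetric] e diff_Suc_1 f using s0 fz by (simp add: field_simps)
  finally show ?thesis .
qed


lemma uniq:
  fixes h :: "real poly"
  assumes sh: "\<And>x. poly h (x+1) = poly h x" and z: "poly h 0 = 0"
  shows "h = 0"
proof (rule ccontr)
  assume "h \<noteq> 0"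
  hence fin: "finite {x. poly h x = 0}" by (rule poly_roots_finite)
  have "\<And>n. poly h (real n) = 0"
  proof -
    fix n show "poly h (real n) = 0"
      by (induction n) (simp_all add: z sh[of "real _", simplified add.commute] add.commute)
  qed
  hence "range real \<subseteq> {x. poly h x = 0}" by auto
  moreover have "infinite (range (real :: nat \<Rightarrow> real))"
    using range_inj_infinite[of "real :: nat \<Rightarrow> real"] inj_of_nat by blast
  ultimately show False using fin finite_subset by blast
qed

lemma base5: "poly (moser_poly 5 6) x = G 5 x"
proof -
  have b4: "poly (binom_poly 4) x = x*(x-1)*(x-2)*(x-3)/24"
    by (simp add: binom_poly_def lessThan_nat_numeral fact_numeral field_simps)
  have b3: "poly (binom_poly 3) x = x*(x-1)*(x-2)/6"
    by (simp add: binom_poly_def lessThan_nat_numeral fact_numeral field_simps)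
  have b2: "poly (binom_poly 2) x = x*(x-1)/2"
    by (simp add: binom_poly_def lessThan_nat_numeral fact_numeral field_simps)
  have b1: "poly (binom_poly 1) x = x"
    by (simp add: binom_poly_def)
  have b0: "poly (binom_poly 0) x = 1"
    by (simp add: binom_poly_def)
  have "poly (moser_poly 5 6) x = poly (binom_poly 4) x - 32 * poly (binom_poly 3) x
     + 243 * poly (binom_poly 2) x - 1024 * poly (binom_poly 1) x + 3125 * poly (binom_poly 0) x"
  proof -
    have e: "{1..5::nat} = {1,2,3,4,5}" by auto
    show ?thesis unfolding moser_eval e by simp
  qed
  also have "\<dots> = (x^4 - 134 * x^3 + 3311 * x^2 - 27754 * x + 75000)/24"
    unfolding b4 b3 b2 b1 b0 by (simp add: field_simps power2_eq_square power3_eq_cube power4_eq_xxxx)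
  also have "\<dots> = G 5 x"
    unfolding G_def by (simp add: fact_numeral)
  finally show ?thesis .
qed

definition R :: "nat \<Rightarrow> real poly" where
  "R s = smult (1 / fact (s - 1))
      ([: 120 * (of_nat s) ^ 4,
          - (240 * (of_nat s) ^ 3 - 90 * (of_nat s) ^ 2 + 4),
          150 * (of_nat s) ^ 2 - 90 * of_nat s + 11,
          - (30 * of_nat s - 16),
          1 :]
       * (\<Prod>p\<in>{6..s}. [:- of_nat p, 1:]))"

lemma pR: "poly (R m) y = G m y" unfolding R_def by (rule rhs_eval)

lemma main: "s \<ge> 5 \<Longrightarrow> moser_poly s 6 = R s"
proof (induction s rule: dec_induct)
  case base
  show ?case by (rule poly_ext) (simp only: pR base5)
next
  case (step n)
  define h where "h = moser_poly (Suc n) 6 - R (Suc n)"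
  have IH: "\<And>y. poly (moser_poly n 6) y = G n y" unfolding step(3) pR ..
  have "h = 0"
  proof (rule uniq)
    fix x show "poly h (x+1) = poly h x"
      unfolding h_def poly_diff pR F_shift G_shift[OF step(1)] IH by simp
  next
    have "Suc n \<ge> 5" using step(1) by simp
    then show "poly h 0 = 0" unfolding h_def poly_diff pR F_zero G_zero[OF \<open>Suc n \<ge> 5\<close>] by simp
  qed
  thus ?case unfolding h_def by simp
qed

theorem mainTheorem9:
  fixes s :: nat
  assumes "s \<ge> 5"
  shows "moser_poly s 6 =
    smult (1 / fact (s - 1))
      ([: 120 * (of_nat s) ^ 4,
          - (240 * (of_nat s) ^ 3 - 90 * (of_nat s) ^ 2 + 4),
          150 * (of_nat s) ^ 2 - 90 * of_nat s + 11,
          - (30 * of_nat s - 16),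
          1 :]
       * (\<Prod>p\<in>{6..s}. [:- of_nat p, 1:]))"
  using main[OF assms] unfolding R_def .

end
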